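(* Let $n\ge1$ be an integer and $m=\lfloor n/2\rfloor+1$. Then $$\gcd_{1\le r\le m}\binom{n-m+r}{r}=1.$$ *)

theory Defs
  imports Main
begin

end

theory Submission
  imports Defs
begin

lemma aux:
  fixes d k m :: nat
  assumes "\<And>r. 1 \<le> r \<Longrightarrow> r \<le> m \<Longrightarrow> d dvd (k + r) choose r"
  shows "i \<le> k \<Longrightarrow> i + 1 \<le> r \<Longrightarrow> r \<le> m \<Longrightarrow> d dvd (k - i + r) choose r"
proof (induction i arbitrary: r)
  case 0
  then show ?case using assms by simp
next
  case (Suc i)
  obtain j where j: "k - i = Suc j" "k - Suc i = j" using Suc.prems by (metis Suc_diff_le Suc_le_D diff_Suc_Suc diff_diff_cancel le_imp_less_Suc less_imp_le_nat)
  obtain s where s: "r = Suc s" using Suc.prems by (cases r) auto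
  have h1: "d dvd (k - i + r) choose r" using Suc by simp
  have h2: "d dvd (k - i + s) choose s" using Suc s by simp
  have eq: "(k - i + r) choose r = ((k - i + s) choose s) + ((j + r) choose r)"
    using j s by simp
  show ?case using h1 h2 eq j by (metis dvd_add_right_iff)
qed

theorem lemma6:
  fixes n m :: nat
  assumes "n \<ge> 1" and "m = n div 2 + 1"
  shows "Gcd ((\<lambda>r. (n - m + r) choose r) ` {1..m}) = 1"
proof -
  define d where "d = Gcd ((\<lambda>r. (n - m + r) choose r) ` {1..m})"
  have "\<And>r. 1 \<le> r \<Longrightarrow> r \<le> m \<Longrightarrow> d dvd (n - m + r) choose r"
    unfolding d_def by (intro Gcd_dvd) auto
  from aux[of m d "n - m", OF this, of "n - m" m] assms
  have "d dvd 1" by simp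
  then show ?thesis unfolding d_def by simp
qed

end
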